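(* Let $p\in(0,1]$. If $p\ge 2^{-d}$, then $\Pi_p$ is almost surely unbounded; if $p<2^{-d}$, then $\Pi_p$ is almost surely bounded.
   Context: For integers $k\ge 0$ let $\mathcal{V}_k:=[-2^k,2^k)^d\subset\mathbf{R}^d$, $\mathcal{S}_0:=\mathcal{V}_0$ and $\mathcal{S}_{k+1}:=\mathcal{V}_{k+1}\setminus\mathcal{V}_k$. For $n\in\mathbf{Z}$, $\mathcal{D}_n$ denotes the set of dyadic cubes $\prod_{i=1}^d[j_i2^n,(j_i+1)2^n)$ with $(j_1,\dots,j_d)\in\mathbf{Z}^d$. Macroscopic fractal percolation: on a probability space $(\Omega,\mathcal{F},\mathbb{P})$, for each integer $k\ge0$ let $\{U_k(Q)\}$ be i.i.d. Uniform$(0,1)$ random variables indexed by the dyadic cubes $Q\subseteq\mathcal{V}_k$ with $Q\in\mathcal{D}_j$ for some $0\le j\le k$, the families for different $k$ being independent. For $x\in\mathcal{V}_k\cap\mathbf{Z}^d$ and $1\le i\le k+1$ let $Q^{(k)}_i(x)$ be the unique cube of $\mathcal{D}_{k+1-i}$ containing $x$. For $p\in(0,1]$, $\Pi_p\subseteq\mathbf{R}^d$ is the union, over all $k\ge0$ and all $x\in\mathbf{Z}^d\cap\mathcal{S}_k$ such that $U_k(Q^{(k)}_i(x))<p$ for every $i=1,\dots,k+1$, of the unit cubes $[x_1,x_1+1)\times\cdots\times[x_d,x_d+1)$. *)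

theory Defs
  imports "HOL-Probability.Probability"
begin

text \<open>A dyadic cube of \<D>_n (n \<ge> 0) is encoded as a pair (n, j) with j in Z^d,
  standing for prod_i [j_i 2^n, (j_i+1) 2^n).  Dimension d = CARD('n).\<close>

type_synonym 'n dcube = "nat \<times> (int ^ 'n)"

definition dcube_set :: "'n::finite dcube \<Rightarrow> (real ^ 'n) set" where
  "dcube_set Q = {y. \<forall>l. real_of_int (snd Q $ l) * 2 ^ fst Q \<le> y $ l
                       \<and> y $ l < real_of_int (snd Q $ l + 1) * 2 ^ fst Q}"

definition Vbox :: "nat \<Rightarrow> (real ^ 'n::finite) set" where
  "Vbox k = {y. \<forall>l. - (2 ^ k) \<le> y $ l \<and> y $ l < 2 ^ k}"

definition Sshell :: "nat \<Rightarrow> (real ^ 'n::finite) set" where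
  "Sshell k = (if k = 0 then Vbox 0 else Vbox k - Vbox (k - 1))"

definition cubes_in :: "nat \<Rightarrow> ('n::finite dcube) set" where
  "cubes_in k = {Q. fst Q \<le> k \<and> dcube_set Q \<subseteq> Vbox k}"

definition int_pt :: "int ^ 'n::finite \<Rightarrow> real ^ 'n" where
  "int_pt x = (\<chi> l. real_of_int (x $ l))"

definition cubeQ :: "nat \<Rightarrow> nat \<Rightarrow> int ^ 'n::finite \<Rightarrow> 'n dcube" where
  "cubeQ k i x = (k + 1 - i, \<chi> l. x $ l div 2 ^ (k + 1 - i))"

definition unit_cube :: "int ^ 'n::finite \<Rightarrow> (real ^ 'n) set" where
  "unit_cube x = {y. \<forall>l. real_of_int (x $ l) \<le> y $ l \<and> y $ l < real_of_int (x $ l) + 1}"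

definition PiP :: "(nat \<Rightarrow> 'n::finite dcube \<Rightarrow> 'a \<Rightarrow> real) \<Rightarrow> real \<Rightarrow> 'a \<Rightarrow> (real ^ 'n) set" where
  "PiP U p \<omega> = \<Union> {unit_cube x | x k. int_pt x \<in> Sshell k \<and>
                         (\<forall>i \<in> {1..k+1}. U k (cubeQ k i x) \<omega> < p)}"

end

theory Submission
  imports Defs "HOL-Probability.Probability"
begin

lemma card_box:
  fixes a :: "'n::finite \<Rightarrow> int" and N :: nat
  shows "card {y::int^'n. \<forall>l. a l \<le> y$l \<and> y$l < a l + int N} = N ^ CARD('n)"
proof -
  have eq: "{y::int^'n. \<forall>l. a l \<le> y$l \<and> y$l < a l + int N} = vec_lambda ` (PiE UNIV (\<lambda>l. {a l..<a l + int N}))"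
  proof (rule set_eqI, rule iffI)
    fix y :: "int^'n" assume "y \<in> {y::int^'n. \<forall>l. a l \<le> y$l \<and> y$l < a l + int N}"
    then have "(\<lambda>l. y$l) \<in> PiE UNIV (\<lambda>l. {a l..<a l + int N})" by auto
    moreover have "y = vec_lambda (\<lambda>l. y$l)" by simp
    ultimately show "y \<in> vec_lambda ` (PiE UNIV (\<lambda>l. {a l..<a l + int N}))" by blast
  next
    fix y :: "int^'n" assume "y \<in> vec_lambda ` (PiE UNIV (\<lambda>l. {a l..<a l + int N}))"
    then show "y \<in> {y::int^'n. \<forall>l. a l \<le> y$l \<and> y$l < a l + int N}" by auto
  qed
  have inj: "inj_on (vec_lambda :: ('n \<Rightarrow> int) \<Rightarrow> int^'n) (PiE UNIV (\<lambda>l. {a l..<a l + int N}))"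
    by (rule inj_onI) (metis vec_lambda_inverse UNIV_I)
  show ?thesis unfolding eq card_image[OF inj] by (simp add: card_PiE)
qed


lemma div_eq_iff_box:
  fixes y c b :: int assumes b: "b > 0"
  shows "y div b = c \<longleftrightarrow> c * b \<le> y \<and> y < c * b + b"
proof
  assume "y div b = c"
  moreover have "y = b * (y div b) + y mod b" by simp
  moreover have "0 \<le> y mod b" "y mod b < b" using b by auto
  ultimately show "c * b \<le> y \<and> y < c * b + b" by (simp add: algebra_simps)
next
  assume h: "c * b \<le> y \<and> y < c * b + b"
  have "(y - c*b) div b = 0" using h b by (intro div_pos_pos_trivial) auto
  moreover have "y div b = ((y - c*b) + c*b) div b" by simp
  moreover have "((y - c*b) + c*b) div b = c + (y - c*b) div b" using b by (intro div_mult_self1) simp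
  ultimately show "y div b = c" by simp
qed

lemma aux_box:
  fixes B c x T :: int
  assumes "B > 0" "c*B \<le> x" "x < c*B + B" "-(T*B) \<le> x" "x < T*B"
  shows "-(T*B) \<le> c*B \<and> c*B + B \<le> T*B"
proof -
  have "(-T)*B < (c+1)*B" using assms by (simp add: algebra_simps)
  then have "-T < c+1" using assms(1) mult_less_cancel_right_pos by blast
  then have "-T \<le> c" by simp
  then have 1: "(-T)*B \<le> c*B" using assms(1) mult_right_mono by (metis less_le)
  have cb: "c*B < T*B" using assms by linarith
  have "c < T" using mult_less_cancel_right_pos[OF assms(1), of c T] cb by blast
  then have "c + 1 \<le> T" by simp
  then have "(c+1)*B \<le> T*B" using assms(1) by (simp add: mult_right_mono)
  with 1 show ?thesis by (simp add: algebra_simps)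
qed

lemma int_pt_Vbox:
  "int_pt x \<in> Vbox k \<longleftrightarrow> (\<forall>l. -(2^k) \<le> x$l \<and> x$l < (2::int)^k)"
proof -
  have "\<And>l. (- (2 ^ k) \<le> real_of_int (x$l)) = (-(2^k) \<le> x$l)"
    by (metis of_int_le_iff of_int_minus of_int_numeral of_int_power)
  moreover have "\<And>l. (real_of_int (x$l) < 2^k) = (x$l < 2^k)"
    by (metis of_int_less_iff of_int_numeral of_int_power)
  ultimately show ?thesis unfolding Vbox_def int_pt_def by simp
qed

lemma cubeQ_in:
  assumes x: "int_pt x \<in> Vbox k" and i: "i \<in> {1..k+1}"
  shows "cubeQ k i x \<in> cubes_in k"
proof -
  define L where "L = k + 1 - i"
  have Lk: "L \<le> k" using i by (auto simp: L_def)
  define B :: int where "B = 2^L"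
  define T :: int where "T = 2^(k-L)"
  have B0: "B > 0" by (simp add: B_def)
  have TB: "T*B = 2^k" unfolding T_def B_def using Lk by (simp flip: power_add)
  have xb: "\<And>l. -(T*B) \<le> x$l \<and> x$l < T*B" using x TB by (simp add: int_pt_Vbox)
  have key: "\<And>l. -(T*B) \<le> (x$l div B)*B \<and> (x$l div B)*B + B \<le> T*B"
  proof -
    fix l
    have "(x$l div B)*B \<le> x$l \<and> x$l < (x$l div B)*B + B"
      using div_eq_iff_box[OF B0, of "x$l" "x$l div B"] by simp
    then show "-(T*B) \<le> (x$l div B)*B \<and> (x$l div B)*B + B \<le> T*B"
      using aux_box[OF B0] xb by blast
  qed
  have "dcube_set (cubeQ k i x) \<subseteq> Vbox k"
  proof
    fix y assume y: "y \<in> dcube_set (cubeQ k i x)"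
    show "y \<in> Vbox k" unfolding Vbox_def
    proof (safe)
      fix l
      have yl: "real_of_int (x$l div B) * 2^L \<le> y$l \<and> y$l < real_of_int (x$l div B + 1) * 2^L"
        using y by (simp add: dcube_set_def cubeQ_def L_def B_def)
      have c1: "real_of_int (-(T*B)) \<le> real_of_int ((x$l div B)*B)"
        using key[of l] by linarith
      have c2: "real_of_int ((x$l div B)*B + B) \<le> real_of_int (T*B)"
        using key[of l] by linarith
      have rB: "real_of_int B = 2^L" by (simp add: B_def)
      have rTB: "real_of_int (T*B) = 2^k" using TB by (metis of_int_numeral of_int_power)
      show "- (2 ^ k) \<le> y $ l" using yl c1 rB rTB by (simp add: algebra_simps)
      show "y $ l < 2 ^ k" using yl c2 rB rTB by (simp add: algebra_simps)
    qed
  qed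
  moreover have "fst (cubeQ k i x) \<le> k" using i by (simp add: cubeQ_def) arith
  ultimately show ?thesis by (simp add: cubes_in_def)
qed

lemma cubeQ_fst: "fst (cubeQ k i x) = k + 1 - i" by (simp add: cubeQ_def)

lemma cubeQ_eq_iff:
  "cubeQ k i x = cubeQ k i y \<longleftrightarrow> (\<forall>l. y$l div 2^(k+1-i) = x$l div 2^(k+1-i))"
  by (auto simp: cubeQ_def vec_eq_iff)



lemma quad_disc:
  fixes a b c :: real
  assumes "a \<ge> 0" "b \<ge> 0" "c \<ge> 0" and q: "\<And>t. 0 \<le> b - 2*t*a + t^2*c"
  shows "a^2 \<le> b * c"
proof (cases "a = 0")
  case True then show ?thesis using assms by simp
next
  case False
  then have a: "a > 0" using assms by simp
  have c: "c > 0"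
  proof (rule ccontr)
    assume "\<not> c > 0" then have "c = 0" using assms by simp
    then have "0 \<le> b - 2*((b+1)/(2*a))*a" using q[of "(b+1)/(2*a)"] by simp
    also have "2*((b+1)/(2*a))*a = b + 1" using a by (simp add: field_simps)
    finally show False by simp
  qed
  have "0 \<le> b - 2*(a/c)*a + (a/c)^2*c" by (rule q)
  also have "b - 2*(a/c)*a + (a/c)^2*c = (b*c - a^2)/c" using c by (simp add: field_simps power2_eq_square)
  finally have "0 \<le> (b*c - a^2)/c" .
  then show ?thesis using c by (simp add: divide_nonneg_pos zero_le_divide_iff)
qed

lemma (in prob_space) second_moment:
  assumes X: "finite X" and E: "\<And>x. x \<in> X \<Longrightarrow> E x \<in> events"
  shows "(\<Sum>x\<in>X. prob (E x))^2 \<le> (\<Sum>x\<in>X. \<Sum>y\<in>X. prob (E x \<inter> E y)) * prob (\<Union>x\<in>X. E x)"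
proof -
  define F where "F = (\<Union>x\<in>X. E x)"
  have F: "F \<in> events" unfolding F_def using X E by auto
  define a where "a = (\<Sum>x\<in>X. prob (E x))"
  define b where "b = (\<Sum>x\<in>X. \<Sum>y\<in>X. prob (E x \<inter> E y))"
  define c where "c = prob F"
  define Z where "Z = (\<lambda>\<omega>. \<Sum>x\<in>X. indicator (E x) \<omega> :: real)"
  have EE: "\<And>x y. x \<in> X \<Longrightarrow> y \<in> X \<Longrightarrow> E x \<inter> E y \<in> events" using E by auto
  have Esp: "\<And>x. x \<in> X \<Longrightarrow> E x \<inter> space M = E x" using E sets.sets_into_space by blast
  have EEsp: "\<And>x y. x \<in> X \<Longrightarrow> y \<in> X \<Longrightarrow> E x \<inter> E y \<inter> space M = E x \<inter> E y" using Esp by blast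
  have Fsp: "F \<inter> space M = F" using F sets.sets_into_space by blast
  have q: "0 \<le> b - 2*t*a + t^2*c" for t
  proof -
    have pw: "(Z \<omega> - t * indicator F \<omega>)^2 =
       (\<Sum>x\<in>X. \<Sum>y\<in>X. indicator (E x \<inter> E y) \<omega>) - 2*t*(\<Sum>x\<in>X. indicator (E x) \<omega>) + t^2 * indicator F \<omega>" for \<omega>
    proof (cases "\<omega> \<in> F")
      case True
      have "Z \<omega> ^2 = (\<Sum>x\<in>X. \<Sum>y\<in>X. indicator (E x) \<omega> * indicator (E y) \<omega>)"
        unfolding Z_def power2_eq_square sum_product by simp
      also have "\<dots> = (\<Sum>x\<in>X. \<Sum>y\<in>X. indicator (E x \<inter> E y) \<omega>)"
        by (simp add: indicator_inter_arith)
      finally show ?thesis using True unfolding Z_def by (simp add: power2_eq_square algebra_simps)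
    next
      case False
      then have "\<And>x. x \<in> X \<Longrightarrow> \<omega> \<notin> E x" by (auto simp: F_def)
      then show ?thesis using False unfolding Z_def by (simp add: indicator_def)
    qed
    have "0 \<le> integral\<^sup>L M (\<lambda>\<omega>. (Z \<omega> - t * indicator F \<omega>)^2)" by simp
    also have "\<dots> = integral\<^sup>L M (\<lambda>\<omega>. (\<Sum>x\<in>X. \<Sum>y\<in>X. indicator (E x \<inter> E y) \<omega>) - 2*t*(\<Sum>x\<in>X. indicator (E x) \<omega>) + t^2 * indicator F \<omega>)"
      using pw by simp
    also have "\<dots> = b - 2*t*a + t^2*c"
    proof -
      have ind: "A \<in> events \<Longrightarrow> integrable M (indicator A :: 'a \<Rightarrow> real)" for A
        by (simp add: emeasure_finite less_top[symmetric])
      have i1: "integrable M (\<lambda>\<omega>. \<Sum>x\<in>X. \<Sum>y\<in>X. indicator (E x \<inter> E y) \<omega> :: real)"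
        by (rule Bochner_Integration.integrable_sum, rule Bochner_Integration.integrable_sum) (use EE ind in auto)
      have i2: "integrable M (\<lambda>\<omega>. 2*t*(\<Sum>x\<in>X. indicator (E x) \<omega> :: real))"
        by (rule integrable_mult_right, rule Bochner_Integration.integrable_sum) (use E ind in auto)
      have i3: "integrable M (\<lambda>\<omega>. t^2 * indicator F \<omega> :: real)"
        by (rule integrable_mult_right) (use F ind in auto)
      have e1: "integral\<^sup>L M (\<lambda>\<omega>. \<Sum>x\<in>X. \<Sum>y\<in>X. indicator (E x \<inter> E y) \<omega> :: real) = b"
      proof -
        have "integral\<^sup>L M (\<lambda>\<omega>. \<Sum>x\<in>X. \<Sum>y\<in>X. indicator (E x \<inter> E y) \<omega> :: real)
             = (\<Sum>x\<in>X. integral\<^sup>L M (\<lambda>\<omega>. \<Sum>y\<in>X. indicator (E x \<inter> E y) \<omega> :: real))"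
          by (rule Bochner_Integration.integral_sum, rule Bochner_Integration.integrable_sum) (use EE ind in auto)
        also have "\<dots> = (\<Sum>x\<in>X. \<Sum>y\<in>X. integral\<^sup>L M (indicator (E x \<inter> E y) :: 'a \<Rightarrow> real))"
          by (intro sum.cong refl Bochner_Integration.integral_sum) (use EE ind in auto)
        also have "\<dots> = b" unfolding b_def using EEsp by simp
        finally show ?thesis .
      qed
      have e2: "integral\<^sup>L M (\<lambda>\<omega>. 2*t*(\<Sum>x\<in>X. indicator (E x) \<omega> :: real)) = 2*t*a"
      proof -
        have "integral\<^sup>L M (\<lambda>\<omega>. (\<Sum>x\<in>X. indicator (E x) \<omega> :: real)) = (\<Sum>x\<in>X. integral\<^sup>L M (indicator (E x) :: 'a \<Rightarrow> real))"
          by (rule Bochner_Integration.integral_sum) (use E ind in auto)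
        then show ?thesis unfolding a_def using Esp by simp
      qed
      have e3: "integral\<^sup>L M (\<lambda>\<omega>. t^2 * indicator F \<omega> :: real) = t^2*c"
        unfolding c_def using Fsp by simp
      have s1: "integral\<^sup>L M (\<lambda>\<omega>. (\<Sum>x\<in>X. \<Sum>y\<in>X. indicator (E x \<inter> E y) \<omega>) - 2*t*(\<Sum>x\<in>X. indicator (E x) \<omega>) + t^2 * indicator F \<omega> :: real)
          = integral\<^sup>L M (\<lambda>\<omega>. (\<Sum>x\<in>X. \<Sum>y\<in>X. indicator (E x \<inter> E y) \<omega>) - 2*t*(\<Sum>x\<in>X. indicator (E x) \<omega>) :: real)
            + integral\<^sup>L M (\<lambda>\<omega>. t^2 * indicator F \<omega> :: real)"
        by (rule Bochner_Integration.integral_add[OF Bochner_Integration.integrable_diff[OF i1 i2] i3])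
      have s2: "integral\<^sup>L M (\<lambda>\<omega>. (\<Sum>x\<in>X. \<Sum>y\<in>X. indicator (E x \<inter> E y) \<omega>) - 2*t*(\<Sum>x\<in>X. indicator (E x) \<omega>) :: real)
          = integral\<^sup>L M (\<lambda>\<omega>. (\<Sum>x\<in>X. \<Sum>y\<in>X. indicator (E x \<inter> E y) \<omega>) :: real) - integral\<^sup>L M (\<lambda>\<omega>. 2*t*(\<Sum>x\<in>X. indicator (E x) \<omega>) :: real)"
        by (rule Bochner_Integration.integral_diff[OF i1 i2])
      show ?thesis unfolding s1 s2 e1 e2 e3 ..
    qed
    finally show ?thesis .
  qed
  have "a^2 \<le> b * c"
    by (rule quad_disc[OF _ _ _ q]) (auto simp: a_def b_def c_def intro!: sum_nonneg)
  then show ?thesis by (simp add: a_def b_def c_def F_def)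
qed



lemma (in prob_space) second_BC:
  fixes G :: "nat \<Rightarrow> 'a set"
  assumes G: "\<And>n. G n \<in> events"
    and ind: "\<And>J. finite J \<Longrightarrow> J \<noteq> {} \<Longrightarrow> prob (\<Inter>n\<in>J. G n) = (\<Prod>n\<in>J. prob (G n))"
    and ns: "\<not> summable (\<lambda>n. 1 - prob (G n))"
  shows "AE \<omega> in M. \<forall>N. \<exists>n\<ge>N. \<omega> \<notin> G n"
proof -
  define q where "q = (\<lambda>n. 1 - prob (G n))"
  have q0: "q n \<ge> 0" for n by (simp add: q_def)
  have unb: "\<exists>M. x < sum q {..<M}" for x
  proof (rule ccontr)
    assume "\<not> (\<exists>M. x < sum q {..<M})"
    then have "\<And>M. sum q {..<M} \<le> x" by (simp add: not_less)
    then have "summable q" using q0 by (intro summableI_nonneg_bounded) auto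
    then show False using ns by (simp add: q_def)
  qed
  have null: "prob (\<Inter>n\<in>{N..}. G n) = 0" for N
  proof -
    define P0 where "P0 = prob (\<Inter>n\<in>{N..}. G n)"
    have bnd: "P0 \<le> exp (- y)" for y
    proof -
      obtain M where M: "max y 0 + sum q {..<N} < sum q {..<M}" using unb by blast
      have NM: "N < M"
      proof (rule ccontr)
        assume "\<not> N < M"
        then have "sum q {..<M} \<le> sum q {..<N}" using q0 by (intro sum_mono2) auto
        then show False using M by linarith
      qed
      have split: "sum q {..<M} = sum q {..<N} + sum q {N..<M}"
        using NM by (metis le_less sum.atLeastLessThan_concat lessThan_atLeast0 zero_le)
      have y: "y < sum q {N..<M}" using M split by linarith
      have "P0 \<le> prob (\<Inter>n\<in>{N..<M}. G n)"
        unfolding P0_def using NM G by (intro finite_measure_mono) auto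
      also have "\<dots> = (\<Prod>n\<in>{N..<M}. prob (G n))" using NM by (intro ind) auto
      also have "\<dots> \<le> (\<Prod>n\<in>{N..<M}. exp (- q n))"
      proof (rule prod_mono)
        fix n assume "n \<in> {N..<M}"
        have "1 + (- q n) \<le> exp (- q n)" by (rule exp_ge_add_one_self)
        then show "0 \<le> prob (G n) \<and> prob (G n) \<le> exp (- q n)" by (simp add: q_def)
      qed
      also have "\<dots> = exp (- sum q {N..<M})"
        using exp_sum[of "{N..<M}" "\<lambda>n. - q n"] by (simp add: sum_negf)
      also have "\<dots> \<le> exp (- y)" using y by simp
      finally show ?thesis .
    qed
    have "P0 \<le> 0"
    proof (rule ccontr)
      assume "\<not> P0 \<le> 0"
      then have pos: "P0 > 0" by simp
      have "P0 \<le> exp (- (- ln P0 + 1))" by (rule bnd)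
      also have "\<dots> = P0 / exp 1" using pos by (simp add: exp_add[symmetric] exp_diff)
      also have "\<dots> < P0" using pos by (simp add: divide_less_eq)
      finally show False by simp
    qed
    then show ?thesis unfolding P0_def using measure_nonneg[of M] by (simp add: antisym)
  qed
  have "AE \<omega> in M. \<exists>n\<ge>N. \<omega> \<notin> G n" for N
  proof (rule AE_I')
    have "(\<Inter>n\<in>{N..}. G n) \<in> events" using G by (intro sets.countable_INT') auto
    then show "(\<Inter>n\<in>{N..}. G n) \<in> null_sets M" using null[of N]
      by (simp add: null_sets_def emeasure_eq_measure)
    show "{x \<in> space M. \<not> (\<exists>n\<ge>N. x \<notin> G n)} \<subseteq> (\<Inter>n\<in>{N..}. G n)" by auto
  qed
  then show ?thesis by (simp add: AE_all_countable)
qed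



locale perc = prob_space M for M :: "'a measure" +
  fixes U :: "nat \<Rightarrow> 'n::finite dcube \<Rightarrow> 'a \<Rightarrow> real" and p :: real
  assumes Umeas: "\<And>k Q. Q \<in> cubes_in k \<Longrightarrow> U k Q \<in> borel_measurable M"
    and Udistr: "\<And>k Q. Q \<in> cubes_in k \<Longrightarrow> distr M lborel (U k Q) = uniform_measure lborel {0..1}"
    and Uind: "indep_vars (\<lambda>_. borel) (\<lambda>(k, Q). U k Q) (SIGMA k:UNIV. cubes_in k)"
    and p0: "0 < p" and p1: "p \<le> 1"
begin

definition Iset :: "(nat \<times> 'n dcube) set" where "Iset = (SIGMA k:UNIV. cubes_in k)"
definition ev :: "nat \<times> 'n dcube \<Rightarrow> 'a set" where
  "ev a = {\<omega> \<in> space M. U (fst a) (snd a) \<omega> < p}"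
definition anc :: "nat \<Rightarrow> int^'n \<Rightarrow> (nat \<times> 'n dcube) set" where
  "anc k x = (\<lambda>i. (k, cubeQ k i x)) ` {1..k+1}"
definition Ex :: "nat \<Rightarrow> int^'n \<Rightarrow> 'a set" where
  "Ex k x = {\<omega> \<in> space M. \<forall>i\<in>{1..k+1}. U k (cubeQ k i x) \<omega> < p}"

lemma ev_sets: "a \<in> Iset \<Longrightarrow> ev a \<in> events"
proof -
  assume a: "a \<in> Iset"
  then have m: "U (fst a) (snd a) \<in> borel_measurable M" using Umeas by (auto simp: Iset_def)
  have "ev a = U (fst a) (snd a) -` {..<p} \<inter> space M" by (auto simp: ev_def)
  moreover have "U (fst a) (snd a) -` {..<p} \<inter> space M \<in> events"
    by (rule measurable_sets[OF m]) simp
  ultimately show ?thesis by simp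
qed

lemma prob_ev: "a \<in> Iset \<Longrightarrow> prob (ev a) = p"
proof -
  assume a: "a \<in> Iset"
  obtain k Q where aq: "a = (k, Q)" by (cases a) auto
  have Q: "Q \<in> cubes_in k" using a aq by (auto simp: Iset_def)
  have m: "U k Q \<in> measurable M lborel" using Umeas[OF Q] by simp
  have lt: "{..<p} \<in> sets lborel" unfolding sets_lborel by (rule borel_open) (rule open_lessThan)
  have "prob (ev a) = measure M (U k Q -` {..<p} \<inter> space M)" by (auto simp: ev_def aq intro!: arg_cong[where f="measure M"])
  also have "\<dots> = measure (distr M lborel (U k Q)) {..<p}"
    by (rule measure_distr[OF m lt, symmetric])
  also have "\<dots> = measure (uniform_measure lborel {0..1::real}) {..<p}" by (simp only: Udistr[OF Q])
  also have "\<dots> = measure lborel ({0..1::real} \<inter> {..<p}) / measure lborel {0..1::real}"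
  proof (rule measure_uniform_measure)
    show "emeasure lborel {0..1::real} \<noteq> 0" by simp
    show "emeasure lborel {0..1::real} \<noteq> \<infinity>" by simp
  qed (rule lt)
  also have "{0..1::real} \<inter> {..<p} = {0..<p}" using p1 by auto
  finally show ?thesis using p0 by simp
qed

lemma prob_inter:
  assumes "finite A" "A \<noteq> {}" "A \<subseteq> Iset"
  shows "prob (\<Inter>a\<in>A. ev a) = p ^ card A"
proof -
  let ?X = "\<lambda>(k, Q). U k Q"
  have "indep_sets (\<lambda>i. {?X i -` B \<inter> space M | B. B \<in> sets borel}) Iset"
    using Uind unfolding indep_vars_def2 Iset_def by (rule conjunct2)
  then have "prob (\<Inter>a\<in>A. ev a) = (\<Prod>a\<in>A. prob (ev a))"
  proof (rule indep_setsD)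
    show "\<forall>j\<in>A. ev j \<in> {?X j -` B \<inter> space M | B. B \<in> sets borel}"
    proof
      fix j assume "j \<in> A"
      have "ev j = ?X j -` {..<p} \<inter> space M" by (auto simp: ev_def split: prod.splits)
      moreover have "{..<p} \<in> sets (borel :: real measure)" by (rule borel_open) (rule open_lessThan)
      ultimately show "ev j \<in> {?X j -` B \<inter> space M | B. B \<in> sets borel}" by blast
    qed
  qed (use assms in blast)+
  also have "\<dots> = (\<Prod>a\<in>A. p)"
  proof (rule prod.cong[OF refl])
    fix a assume "a \<in> A" then show "prob (ev a) = p" using assms(3) prob_ev by blast
  qed
  finally show ?thesis by (simp only: prod_constant)
qed

lemma anc_sub: assumes "int_pt x \<in> Vbox k" shows "anc k x \<subseteq> Iset"
proof
  fix a assume "a \<in> anc k x"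
  then obtain i where "i \<in> {1..k+1}" "a = (k, cubeQ k i x)" by (auto simp: anc_def)
  then show "a \<in> Iset" using cubeQ_in[OF assms] by (simp add: Iset_def)
qed

lemma inj_anc: "inj_on (\<lambda>i. (k, cubeQ k i x)) {1..k+1}"
proof (rule inj_onI)
  fix i j assume "i \<in> {1..k+1}" "j \<in> {1..k+1}" "(k, cubeQ k i x) = (k, cubeQ k j x)"
  then show "i = j" using cubeQ_fst[of k i x] cubeQ_fst[of k j x] by auto
qed

lemma card_anc: "card (anc k x) = k + 1"
  unfolding anc_def using card_image[OF inj_anc] by simp

lemma Ex_eq: "Ex k x = (\<Inter>a\<in>anc k x. ev a)"
proof -
  have "Ex k x = (\<Inter>i\<in>{1..k+1}. ev (k, cubeQ k i x))"
  proof (intro set_eqI iffI)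
    fix \<omega> assume "\<omega> \<in> Ex k x" then show "\<omega> \<in> (\<Inter>i\<in>{1..k+1}. ev (k, cubeQ k i x))"
      by (simp add: Ex_def ev_def)
  next
    fix \<omega> assume h: "\<omega> \<in> (\<Inter>i\<in>{1..k+1}. ev (k, cubeQ k i x))"
    then have "\<omega> \<in> ev (k, cubeQ k 1 x)" by simp
    then have "\<omega> \<in> space M" by (simp add: ev_def)
    with h show "\<omega> \<in> Ex k x" by (simp add: Ex_def ev_def)
  qed
  then show ?thesis by (simp only: anc_def image_image)
qed

lemma Ex_sets: "int_pt x \<in> Vbox k \<Longrightarrow> Ex k x \<in> events"
proof -
  assume "int_pt x \<in> Vbox k"
  then have "\<And>a. a \<in> anc k x \<Longrightarrow> ev a \<in> events" using anc_sub ev_sets by blast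
  moreover have "anc k x \<noteq> {}" "finite (anc k x)" by (auto simp: anc_def)
  ultimately show ?thesis unfolding Ex_eq by (intro sets.finite_INT) auto
qed

lemma anc_fin: "finite (anc k x)" "anc k x \<noteq> {}" by (auto simp: anc_def)

lemma prob_Ex: assumes h: "int_pt x \<in> Vbox k" shows "prob (Ex k x) = p ^ (k+1)"
  by (simp only: Ex_eq prob_inter[OF anc_fin anc_sub[OF h]] card_anc)

definition Sh :: "nat \<Rightarrow> int^'n \<Rightarrow> int^'n \<Rightarrow> nat set" where
  "Sh k x y = {i\<in>{1..k+1}. cubeQ k i x = cubeQ k i y}"

lemma prob_Ex2:
  assumes "int_pt x \<in> Vbox k" "int_pt y \<in> Vbox k"
  shows "prob (Ex k x \<inter> Ex k y) = p ^ (card (anc k x \<union> anc k y))"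
    and "card (anc k x \<union> anc k y) + card (Sh k x y) = 2*(k+1)"
proof -
  have eq: "Ex k x \<inter> Ex k y = (\<Inter>a\<in>anc k x \<union> anc k y. ev a)" unfolding Ex_eq by (simp only: INT_Un)
  have fin: "finite (anc k x \<union> anc k y)" "anc k x \<union> anc k y \<noteq> {}" using anc_fin by auto
  have sub: "anc k x \<union> anc k y \<subseteq> Iset" using anc_sub[OF assms(1)] anc_sub[OF assms(2)] by blast
  show "prob (Ex k x \<inter> Ex k y) = p ^ (card (anc k x \<union> anc k y))"
    unfolding eq by (rule prob_inter[OF fin sub])
  have int: "anc k x \<inter> anc k y = (\<lambda>i. (k, cubeQ k i x)) ` Sh k x y"
  proof
    show "anc k x \<inter> anc k y \<subseteq> (\<lambda>i. (k, cubeQ k i x)) ` Sh k x y"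
    proof
      fix a assume "a \<in> anc k x \<inter> anc k y"
      then obtain i j where i: "i \<in> {1..k+1}" "a = (k, cubeQ k i x)" and j: "j \<in> {1..k+1}" "a = (k, cubeQ k j y)"
        by (auto simp: anc_def)
      then have "i = j" using cubeQ_fst[of k i x] cubeQ_fst[of k j y] by auto
      then show "a \<in> (\<lambda>i. (k, cubeQ k i x)) ` Sh k x y" using i j unfolding Sh_def
        by (intro image_eqI[of _ _ i]) auto
    qed
    show "(\<lambda>i. (k, cubeQ k i x)) ` Sh k x y \<subseteq> anc k x \<inter> anc k y"
      by (auto simp: Sh_def anc_def) (metis image_eqI atLeastAtMost_iff)
  qed
  have "Sh k x y \<subseteq> {1..k+1}" unfolding Sh_def by blast
  then have "inj_on (\<lambda>i. (k, cubeQ k i x)) (Sh k x y)" by (rule inj_on_subset[OF inj_anc[of k x]])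
  then have "card (anc k x \<inter> anc k y) = card (Sh k x y)"
    unfolding int by (rule card_image)
  moreover have "card (anc k x) + card (anc k y) = card (anc k x \<union> anc k y) + card (anc k x \<inter> anc k y)"
    by (rule card_Un_Int[OF anc_fin(1) anc_fin(1)])
  ultimately show "card (anc k x \<union> anc k y) + card (Sh k x y) = 2*(k+1)" using card_anc[of k x] card_anc[of k y] by simp
qed

end


lemma card_div_class:
  fixes c :: "int^'n::finite"
  shows "card {y::int^'n. \<forall>l. y$l div 2^L = c$l} = (2^L) ^ CARD('n)"
proof -
  have "{y::int^'n. \<forall>l. y$l div 2^L = c$l} = {y::int^'n. \<forall>l. c$l * 2^L \<le> y$l \<and> y$l < c$l * 2^L + int (2^L)}"
    using div_eq_iff_box[of "2^L"] by simp
  then show ?thesis using card_box[of "\<lambda>l. c$l * 2^L" "2^L"] by simp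
qed

lemma finite_div_class: "finite {y::int^'n::finite. \<forall>l. y$l div 2^L = c$l}"
  using card_div_class[of L c] by (intro card_ge_0_finite) simp

lemma pow_card_le:
  fixes m :: real
  assumes m: "m \<ge> 1" and S: "S \<subseteq> {1..n}"
  shows "m ^ card S \<le> 1 + (\<Sum>j\<in>S. m^j)"
proof (cases "S = {}")
  case True then show ?thesis by simp
next
  case False
  have fin: "finite S" using S finite_subset by blast
  have "S \<subseteq> {1..Max S}" using S fin by auto
  then have "card S \<le> Max S" using card_mono[of "{1..Max S}" S] by simp
  then have "m ^ card S \<le> m ^ Max S" using m by (intro power_increasing) auto
  also have "\<dots> \<le> (\<Sum>j\<in>S. m^j)" using fin False m by (intro member_le_sum) auto
  finally show ?thesis by simp
qed

context perc begin

lemma sum_pair_bound: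
  fixes X :: "(int^'n) set"
  assumes X: "finite X" "\<And>y. y \<in> X \<Longrightarrow> int_pt y \<in> Vbox k" and x: "x \<in> X"
    and pm: "p * 2^CARD('n) \<ge> 1"
  shows "(\<Sum>y\<in>X. prob (Ex k x \<inter> Ex k y)) \<le> p^(2*(k+1)) * (card X + real (k+1) * (2::real)^(CARD('n)*(k+1)))"
proof -
  define m :: real where "m = 2^CARD('n)"
  have m1: "m \<ge> 1" by (simp add: m_def)
  have pm': "p * m \<ge> 1" using pm by (simp add: m_def)
  have step1: "prob (Ex k x \<inter> Ex k y) \<le> p^(2*(k+1)) * (1 + (\<Sum>j\<in>{1..k+1}. if cubeQ k j x = cubeQ k j y then m^j else 0))"
    if y: "y \<in> X" for y
  proof -
    let ?cu = "card (anc k x \<union> anc k y)" and ?s = "card (Sh k x y)"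
    have pe: "prob (Ex k x \<inter> Ex k y) = p ^ ?cu" and cs: "?cu + ?s = 2*(k+1)"
      using prob_Ex2[OF X(2)[OF x] X(2)[OF y]] by auto
    have "p ^ ?cu = p ^ ?cu * 1" by simp
    also have "\<dots> \<le> p ^ ?cu * (p*m)^?s"
      using pm' p0 by (intro mult_left_mono one_le_power) auto
    also have "\<dots> = p^(2*(k+1)) * m^?s" using cs
      by (metis (no_types, lifting) mult.assoc power_add power_mult_distrib)
    also have "m^?s \<le> 1 + (\<Sum>j\<in>Sh k x y. m^j)"
      by (rule pow_card_le[OF m1, of _ "k+1"]) (auto simp: Sh_def)
    also have "(\<Sum>j\<in>Sh k x y. m^j) = (\<Sum>j\<in>{1..k+1}. if cubeQ k j x = cubeQ k j y then m^j else 0)"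
      unfolding Sh_def by (rule sum.inter_filter) simp
    finally show ?thesis using pe p0 by (simp add: mult_left_mono)
  qed
  have cnt: "card {y\<in>X. cubeQ k j x = cubeQ k j y} \<le> (2::nat)^(CARD('n)*(k+1-j))" for j
  proof -
    have "{y\<in>X. cubeQ k j x = cubeQ k j y} \<subseteq> {y::int^'n. \<forall>l. y$l div 2^(k+1-j) = x$l div 2^(k+1-j)}"
      using cubeQ_eq_iff[of k j x] by auto
    then have "card {y\<in>X. cubeQ k j x = cubeQ k j y} \<le> card {y::int^'n. \<forall>l. y$l div 2^(k+1-j) = (\<chi> l. x$l div 2^(k+1-j))$l}"
      by (intro card_mono finite_div_class) auto
    also have "\<dots> = (2^(k+1-j))^CARD('n)" by (rule card_div_class)
    finally show ?thesis by (simp add: power_mult[symmetric] mult.commute)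
  qed
  have "(\<Sum>y\<in>X. prob (Ex k x \<inter> Ex k y)) \<le> (\<Sum>y\<in>X. p^(2*(k+1)) * (1 + (\<Sum>j\<in>{1..k+1}. if cubeQ k j x = cubeQ k j y then m^j else 0)))"
    by (intro sum_mono step1)
  also have "\<dots> = p^(2*(k+1)) * (card X + (\<Sum>j\<in>{1..k+1}. m^j * card {y\<in>X. cubeQ k j x = cubeQ k j y}))"
  proof -
    have "(\<Sum>y\<in>X. (\<Sum>j\<in>{1..k+1}. if cubeQ k j x = cubeQ k j y then m^j else 0))
        = (\<Sum>j\<in>{1..k+1}. \<Sum>y\<in>X. if cubeQ k j x = cubeQ k j y then m^j else 0)" by (rule sum.swap)
    also have "\<dots> = (\<Sum>j\<in>{1..k+1}. m^j * card {y\<in>X. cubeQ k j x = cubeQ k j y})"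
      using X(1) by (intro sum.cong refl) (simp add: sum.If_cases Int_def conj_commute)
    finally have e: "(\<Sum>y\<in>X. (\<Sum>j\<in>{1..k+1}. if cubeQ k j x = cubeQ k j y then m^j else 0))
        = (\<Sum>j\<in>{1..k+1}. m^j * card {y\<in>X. cubeQ k j x = cubeQ k j y})" .
    have "(\<Sum>y\<in>X. p^(2*(k+1)) * (1 + (\<Sum>j\<in>{1..k+1}. if cubeQ k j x = cubeQ k j y then m^j else 0)))
       = p^(2*(k+1)) * (\<Sum>y\<in>X. 1 + (\<Sum>j\<in>{1..k+1}. if cubeQ k j x = cubeQ k j y then m^j else 0))"
      by (rule sum_distrib_left[symmetric])
    also have "(\<Sum>y\<in>X. 1 + (\<Sum>j\<in>{1..k+1}. if cubeQ k j x = cubeQ k j y then m^j else 0))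
       = card X + (\<Sum>y\<in>X. (\<Sum>j\<in>{1..k+1}. if cubeQ k j x = cubeQ k j y then m^j else 0))"
      by (simp only: sum.distrib) simp
    finally show ?thesis unfolding e .
  qed
  also have "\<dots> \<le> p^(2*(k+1)) * (card X + (\<Sum>j\<in>{1..k+1}. m^(k+1)))"
  proof -
    have "m^j * card {y\<in>X. cubeQ k j x = cubeQ k j y} \<le> m^(k+1)" if j: "j \<in> {1..k+1}" for j
    proof -
      have "real (card {y\<in>X. cubeQ k j x = cubeQ k j y}) \<le> real ((2::nat)^(CARD('n)*(k+1-j)))"
        using cnt[of j] by linarith
      also have "\<dots> = m^(k+1-j)" by (simp add: m_def power_mult)
      finally have "m^j * card {y\<in>X. cubeQ k j x = cubeQ k j y} \<le> m^j * m^(k+1-j)"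
        using m1 by (intro mult_left_mono) auto
      also have "\<dots> = m^(k+1)" using j by (simp flip: power_add)
      finally show ?thesis .
    qed
    then show ?thesis using p0 by (intro mult_left_mono add_left_mono sum_mono) auto
  qed
  also have "\<dots> = p^(2*(k+1)) * (card X + real (k+1) * (2::real)^(CARD('n)*(k+1)))"
    by (simp add: m_def power_mult power_add)
  finally show ?thesis .
qed

end


context perc begin

definition Xk :: "nat \<Rightarrow> (int^'n) set" where
  "Xk k = {y. \<forall>l. (2::int)^(k-1) \<le> y$l \<and> y$l < 2^(k-1) + int (2^(k-1))}"

lemma card_Xk: "card (Xk k) = (2^(k-1)) ^ CARD('n)"
  unfolding Xk_def by (rule card_box)

lemma fin_Xk: "finite (Xk k)"
  using card_Xk[of k] by (intro card_ge_0_finite) simp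

lemma two_pow_pred: "k \<ge> 1 \<Longrightarrow> (2::int)^(k-1) + 2^(k-1) = 2^k"
  by (cases k) auto

lemma Xk_V: assumes "k \<ge> 1" "y \<in> Xk k" shows "int_pt y \<in> Vbox k"
proof -
  have "\<And>l. -(2^k) \<le> y$l \<and> y$l < (2::int)^k"
  proof -
    fix l
    have "(2::int)^(k-1) \<le> y$l" "y$l < 2^(k-1) + 2^(k-1)" using assms(2) by (auto simp: Xk_def)
    moreover have "(0::int) \<le> 2^(k-1)" by simp
    moreover have "(0::int) \<le> 2^k" by simp
    ultimately show "-(2^k) \<le> y$l \<and> y$l < (2::int)^k" using two_pow_pred[OF assms(1)] by linarith
  qed
  then show ?thesis by (simp add: int_pt_Vbox)
qed

lemma Xk_S: assumes "k \<ge> 1" "y \<in> Xk k" shows "int_pt y \<in> Sshell k"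
proof -
  have "(2::int)^(k-1) \<le> y$l" for l using assms(2) unfolding Xk_def by blast
  then have "\<not> (y$l < (2::int)^(k-1))" for l by (simp add: not_less)
  then have "int_pt y \<notin> Vbox (k-1)" by (auto simp: int_pt_Vbox)
  then show ?thesis using Xk_V[OF assms] assms(1) by (simp add: Sshell_def)
qed

definition Fk :: "nat \<Rightarrow> 'a set" where "Fk k = (\<Union>x\<in>Xk k. Ex k x)"

lemma Fk_sets: "k \<ge> 1 \<Longrightarrow> Fk k \<in> events"
  unfolding Fk_def using fin_Xk Ex_sets Xk_V by (intro sets.finite_UN) auto

lemma Fk_lower:
  assumes k: "k \<ge> 1" and pm: "p * 2^CARD('n) \<ge> 1"
  shows "1 / (((2::real)^CARD('n))^2 * real (k+2)) \<le> prob (Fk k)"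
proof -
  define m :: real where "m = 2^CARD('n)"
  define c :: real where "c = real (card (Xk k))"
  define P where "P = prob (Fk k)"
  have m1: "m \<ge> 1" by (simp add: m_def)
  have cm: "c = m^(k-1)" by (simp add: c_def card_Xk m_def power_mult[symmetric] mult.commute)
  have c0: "c > 0" using cm m1 by simp
  have P0: "P \<ge> 0" by (simp add: P_def)
  have eqm: "(2::real)^(CARD('n)*(k+1)) = m^(k+1)" unfolding m_def by (rule power_mult)
  have V: "\<And>x. x \<in> Xk k \<Longrightarrow> int_pt x \<in> Vbox k" using Xk_V[OF k] by blast
  have sm: "(\<Sum>x\<in>Xk k. prob (Ex k x))^2 \<le> (\<Sum>x\<in>Xk k. \<Sum>y\<in>Xk k. prob (Ex k x \<inter> Ex k y)) * P"
    unfolding P_def Fk_def by (rule second_moment[OF fin_Xk Ex_sets[OF V]])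
  have a: "(\<Sum>x\<in>Xk k. prob (Ex k x)) = c * p^(k+1)"
    using prob_Ex[OF V] by (simp add: c_def)
  have b: "(\<Sum>x\<in>Xk k. \<Sum>y\<in>Xk k. prob (Ex k x \<inter> Ex k y)) \<le> c * (p^(2*(k+1)) * (c + real (k+1) * m^(k+1)))"
  proof -
    have "(\<Sum>x\<in>Xk k. \<Sum>y\<in>Xk k. prob (Ex k x \<inter> Ex k y)) \<le> (\<Sum>x\<in>Xk k. p^(2*(k+1)) * (c + real (k+1) * m^(k+1)))"
    proof (rule sum_mono)
      fix x assume x: "x \<in> Xk k"
      show "(\<Sum>y\<in>Xk k. prob (Ex k x \<inter> Ex k y)) \<le> p^(2*(k+1)) * (c + real (k+1) * m^(k+1))"
        using sum_pair_bound[OF fin_Xk V x pm, unfolded eqm] unfolding c_def .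
    qed
    also have "\<dots> = c * (p^(2*(k+1)) * (c + real (k+1) * m^(k+1)))" by (simp add: c_def)
    finally show ?thesis .
  qed
  have "(c * p^(k+1))^2 \<le> c * (p^(2*(k+1)) * (c + real (k+1) * m^(k+1))) * P"
    using sm a b P0 by (metis (no_types, lifting) mult_right_mono order_trans)
  then have "(c * p^(2*(k+1))) * c \<le> (c * p^(2*(k+1))) * ((c + real (k+1) * m^(k+1)) * P)"
    by (simp add: power2_eq_square power_mult_distrib power_mult algebra_simps)
  then have cc: "c \<le> (c + real (k+1) * m^(k+1)) * P"
    using c0 p0 by (simp add: mult_le_cancel_left_pos)
  have "c \<le> m^(k+1)" unfolding cm using m1 by (intro power_increasing) auto
  then have "c + real (k+1) * m^(k+1) \<le> real (k+2) * m^(k+1)" by (simp add: algebra_simps)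
  then have "c \<le> real (k+2) * m^(k+1) * P" using cc P0 by (meson mult_right_mono order_trans)
  also have "m^(k+1) = m^2 * c" unfolding cm using k by (simp flip: power_add)
  finally have "c * 1 \<le> c * (real (k+2) * m^2 * P)" by (simp add: algebra_simps)
  then have "1 \<le> real (k+2) * m^2 * P" using c0 by (simp add: mult_le_cancel_left_pos)
  moreover have pos: "m^2 * real (k+2) > 0" using m1 by simp
  ultimately have "1 / (m^2 * real (k+2)) \<le> P" by (simp add: pos_divide_le_eq algebra_simps)
  then show ?thesis unfolding P_def m_def .
qed

end


context perc begin

definition Eg :: "nat \<times> 'n dcube \<Rightarrow> 'a set set" where
  "Eg i = {(\<lambda>(k, Q). U k Q) i -` B \<inter> space M | B. B \<in> sets borel}"

definition Kn :: "nat \<Rightarrow> (nat \<times> 'n dcube) set" where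
  "Kn n = {Suc n} \<times> cubes_in (Suc n)"

definition Gn :: "nat \<Rightarrow> 'a set" where "Gn n = space M - Fk (Suc n)"

lemma indep_Kn: "indep_sets (\<lambda>n. sigma_sets (space M) (\<Union>i\<in>Kn n. Eg i)) UNIV"
proof (rule indep_sets_collect_sigma)
  have "indep_sets Eg Iset"
    using Uind unfolding indep_vars_def2 Iset_def Eg_def by (rule conjunct2)
  moreover have "(\<Union>n\<in>UNIV. Kn n) \<subseteq> Iset" unfolding Kn_def Iset_def by blast
  ultimately show "indep_sets Eg (\<Union>n\<in>UNIV. Kn n)" using indep_sets_mono_index by blast
next
  fix i n
  show "Int_stable (Eg i)" unfolding Int_stable_def
  proof (intro ballI)
    fix a b assume "a \<in> Eg i" "b \<in> Eg i"
    then obtain A B where A: "A \<in> sets borel" "a = (\<lambda>(k, Q). U k Q) i -` A \<inter> space M"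
      and B: "B \<in> sets borel" "b = (\<lambda>(k, Q). U k Q) i -` B \<inter> space M" unfolding Eg_def by blast
    have "a \<inter> b = (\<lambda>(k, Q). U k Q) i -` (A \<inter> B) \<inter> space M" using A B by blast
    moreover have "A \<inter> B \<in> sets borel" using A B by blast
    ultimately show "a \<inter> b \<in> Eg i" unfolding Eg_def by blast
  qed
next
  show "disjoint_family_on Kn UNIV" unfolding disjoint_family_on_def Kn_def by blast
qed

lemma Gn_in: "Gn n \<in> sigma_sets (space M) (\<Union>i\<in>Kn n. Eg i)"
proof -
  let ?S = "sigma_sets (space M) (\<Union>i\<in>Kn n. Eg i)"
  have sub: "(\<Union>i\<in>Kn n. Eg i) \<subseteq> Pow (space M)" unfolding Eg_def by blast
  interpret S: sigma_algebra "space M" ?S by (rule sigma_algebra_sigma_sets[OF sub])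
  have lt: "{..<p} \<in> sets (borel :: real measure)" by (rule borel_open) (rule open_lessThan)
  have evS: "ev a \<in> ?S" if a: "a \<in> Kn n" for a
  proof -
    have "ev a = (\<lambda>(k, Q). U k Q) a -` {..<p} \<inter> space M" by (auto simp: ev_def split: prod.splits)
    then have "ev a \<in> Eg a" unfolding Eg_def using lt by blast
    then show ?thesis using a by (intro sigma_sets.Basic) blast
  qed
  have ExS: "Ex (Suc n) x \<in> ?S" if x: "x \<in> Xk (Suc n)" for x
  proof -
    have V: "int_pt x \<in> Vbox (Suc n)" using Xk_V[of "Suc n" x] x by simp
    have "anc (Suc n) x \<subseteq> Kn n"
    proof
      fix a assume "a \<in> anc (Suc n) x"
      then obtain i where "i \<in> {1..Suc n+1}" "a = (Suc n, cubeQ (Suc n) i x)" by (auto simp: anc_def)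
      then show "a \<in> Kn n" using cubeQ_in[OF V] by (simp add: Kn_def)
    qed
    then show ?thesis unfolding Ex_eq using anc_fin evS by (intro S.finite_INT) auto
  qed
  have "Fk (Suc n) \<in> ?S" unfolding Fk_def using fin_Xk ExS by (intro S.finite_UN) auto
  then show ?thesis unfolding Gn_def by (rule S.compl_sets)
qed

lemma Gn_indep: "finite J \<Longrightarrow> J \<noteq> {} \<Longrightarrow> prob (\<Inter>n\<in>J. Gn n) = (\<Prod>n\<in>J. prob (Gn n))"
  by (rule indep_setsD[OF indep_Kn]) (use Gn_in in auto)

lemma Gn_sets: "Gn n \<in> events"
  unfolding Gn_def using Fk_sets[of "Suc n"] by auto

lemma unbounded_AE:
  assumes pm: "p * 2^CARD('n) \<ge> 1"
  shows "AE \<omega> in M. \<not> bounded (PiP U p \<omega>)"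
proof -
  define m :: real where "m = 2^CARD('n)"
  have m1: "m \<ge> 1" by (simp add: m_def)
  have ns: "\<not> summable (\<lambda>n. 1 - prob (Gn n))"
  proof
    assume "summable (\<lambda>n. 1 - prob (Gn n))"
    moreover have "1 - prob (Gn n) = prob (Fk (Suc n))" for n
      unfolding Gn_def using prob_compl[OF Fk_sets[of "Suc n"]] by simp
    ultimately have s: "summable (\<lambda>n. prob (Fk (Suc n)))" by simp
    have "summable (\<lambda>n. inverse (m^2) * inverse (real (n+3)))"
    proof (rule summable_comparison_test'[OF s])
      fix n :: nat
      have "1 / (m^2 * real (Suc n + 2)) \<le> prob (Fk (Suc n))"
        using Fk_lower[of "Suc n", OF _ pm] unfolding m_def by simp
      moreover have "1 / (m^2 * real (Suc n + 2)) = inverse (m^2) * inverse (real (n+3))"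
        by (simp add: field_simps)
      moreover have "inverse (m^2) * inverse (real (n+3)) \<ge> 0" by simp
      ultimately show "norm (inverse (m^2) * inverse (real (n+3))) \<le> prob (Fk (Suc n))" by simp
    qed
    then have "summable (\<lambda>n. inverse (real (n+3)))" using m1 by simp
    then have "summable (\<lambda>n. inverse (of_nat n) :: real)"
      using summable_iff_shift[of "\<lambda>n. inverse (of_nat n) :: real" 3] by simp
    then show False using not_summable_harmonic by blast
  qed
  have BC: "AE \<omega> in M. \<forall>N. \<exists>n\<ge>N. \<omega> \<notin> Gn n"
    by (rule second_BC[OF Gn_sets Gn_indep ns])
  show ?thesis using BC AE_space
  proof eventually_elim
    case (elim \<omega>)
    show "\<not> bounded (PiP U p \<omega>)"
    proof
      assume "bounded (PiP U p \<omega>)"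
      then obtain a where a: "\<And>y. y \<in> PiP U p \<omega> \<Longrightarrow> norm y \<le> a" unfolding bounded_iff by blast
      obtain N where N: "a < 2^N" using real_arch_pow[of 2 a] by auto
      obtain n where n: "n \<ge> N" "\<omega> \<notin> Gn n" using elim by blast
      then have "\<omega> \<in> Fk (Suc n)" using elim unfolding Gn_def by blast
      then obtain x where x: "x \<in> Xk (Suc n)" "\<omega> \<in> Ex (Suc n) x" unfolding Fk_def by blast
      have S: "int_pt x \<in> Sshell (Suc n)" using Xk_S[of "Suc n" x] x by simp
      have U: "\<forall>i\<in>{1..Suc n+1}. U (Suc n) (cubeQ (Suc n) i x) \<omega> < p" using x(2) unfolding Ex_def by blast
      have "int_pt x \<in> unit_cube x" unfolding unit_cube_def int_pt_def by simp
      then have inP: "int_pt x \<in> PiP U p \<omega>" unfolding PiP_def using S U by blast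
      define l :: 'n where "l = undefined"
      have xl: "(2::int)^n \<le> x$l" using x(1) unfolding Xk_def by simp
      have "(2::real)^N \<le> 2^n" using n(1) by (simp add: power_increasing)
      also have "(2::real)^n \<le> real_of_int (x$l)" using xl by (metis of_int_le_iff of_int_numeral of_int_power)
      also have "\<dots> = int_pt x $ l" by (simp add: int_pt_def)
      also have "\<dots> \<le> norm (int_pt x)" using component_le_norm_cart[of "int_pt x" l] by simp
      also have "\<dots> \<le> a" using a[OF inP] .
      finally show False using N by simp
    qed
  qed
qed

end


context perc begin

definition Vk :: "nat \<Rightarrow> (int^'n) set" where
  "Vk k = {y. \<forall>l. -(2^k) \<le> y$l \<and> y$l < -(2^k) + int (2^(k+1))}"

lemma Vk_iff: "x \<in> Vk k \<longleftrightarrow> int_pt x \<in> Vbox k"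
  unfolding Vk_def int_pt_Vbox by simp

lemma card_Vk: "card (Vk k) = (2^(k+1)) ^ CARD('n)"
  unfolding Vk_def by (rule card_box)

lemma fin_Vk: "finite (Vk k)"
  using card_Vk[of k] by (intro card_ge_0_finite) simp

definition Hk :: "nat \<Rightarrow> 'a set" where "Hk k = (\<Union>x\<in>Vk k. Ex k x)"

lemma Hk_sets: "Hk k \<in> events"
  unfolding Hk_def using fin_Vk Ex_sets Vk_iff by (intro sets.finite_UN) auto

lemma prob_Hk: "prob (Hk k) \<le> (p * 2^CARD('n))^(k+1)"
proof -
  have "prob (Hk k) \<le> (\<Sum>x\<in>Vk k. prob (Ex k x))"
    unfolding Hk_def using fin_Vk Ex_sets Vk_iff by (intro finite_measure_subadditive_finite) auto
  also have "\<dots> = (\<Sum>x\<in>Vk k. p^(k+1))" using prob_Ex Vk_iff by (intro sum.cong) auto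
  also have "\<dots> = real ((2^(k+1)) ^ CARD('n)) * p^(k+1)" by (simp add: card_Vk)
  also have "real ((2^(k+1)) ^ CARD('n)) = ((2::real)^CARD('n))^(k+1)"
    by (simp add: power_mult[symmetric] mult.commute)
  finally show ?thesis by (simp add: power_mult_distrib mult_ac)
qed

lemma bounded_AE:
  assumes pm: "p * 2^CARD('n) < 1"
  shows "AE \<omega> in M. bounded (PiP U p \<omega>)"
proof -
  define r where "r = p * 2^CARD('n)"
  have r0: "r \<ge> 0" "r < 1" using p0 pm by (auto simp: r_def)
  have "summable (\<lambda>k. r * r^k)" using r0 by (intro summable_mult summable_geometric) simp
  then have sr: "summable (\<lambda>k. r^(k+1))" by simp
  have "summable (\<lambda>k. measure M (Hk k))"
  proof (rule summable_comparison_test'[OF sr])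
    fix k :: nat show "norm (measure M (Hk k)) \<le> r^(k+1)" using prob_Hk[of k] by (simp add: r_def)
  qed
  then have BC: "AE \<omega> in M. eventually (\<lambda>k. \<omega> \<in> space M - Hk k) sequentially"
    by (intro borel_cantelli_AE1 Hk_sets) (simp_all add: less_top[symmetric])
  show ?thesis using BC
  proof eventually_elim
    case (elim \<omega>)
    then obtain K where K: "\<And>k. k \<ge> K \<Longrightarrow> \<omega> \<in> space M - Hk k" unfolding eventually_sequentially by blast
    have sp: "\<omega> \<in> space M" using K[of K] by blast
    have bnd: "norm y \<le> real CARD('n) * (2^K + 1)" if y: "y \<in> PiP U p \<omega>" for y
    proof -
      obtain x k where y1: "y \<in> unit_cube x" and S: "int_pt x \<in> Sshell k"
        and U: "\<forall>i\<in>{1..k+1}. U k (cubeQ k i x) \<omega> < p"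
        using y unfolding PiP_def by blast
      have V: "int_pt x \<in> Vbox k" using S by (auto simp: Sshell_def split: if_splits)
      have "\<omega> \<in> Ex k x" using sp U unfolding Ex_def by blast
      then have "\<omega> \<in> Hk k" unfolding Hk_def using V Vk_iff by blast
      then have kK: "k < K" using K by (meson DiffD2 not_le)
      have "norm y \<le> (\<Sum>l\<in>UNIV. \<bar>y$l\<bar>)" by (rule norm_le_l1_cart)
      also have "\<dots> \<le> (\<Sum>l\<in>(UNIV::'n set). 2^K + 1)"
      proof (rule sum_mono)
        fix l
        have xb: "-(2^k) \<le> x$l \<and> x$l < (2::int)^k" using V int_pt_Vbox by blast
        then have xr: "-(2^k) \<le> real_of_int (x$l) \<and> real_of_int (x$l) < (2::real)^k"
          by (metis of_int_le_iff of_int_less_iff of_int_minus of_int_numeral of_int_power)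
        have yl: "real_of_int (x$l) \<le> y$l \<and> y$l < real_of_int (x$l) + 1" using y1 unfolding unit_cube_def by blast
        have "(2::real)^k \<le> 2^K" using kK by (intro power_increasing) auto
        then show "\<bar>y$l\<bar> \<le> 2^K + 1" using xr yl by linarith
      qed
      also have "\<dots> = real CARD('n) * (2^K + 1)" by simp
      finally show ?thesis .
    qed
    then show "bounded (PiP U p \<omega>)" unfolding bounded_iff by blast
  qed
qed

end

theorem lemma3p3:
  fixes M :: "'a measure"
    and U :: "nat \<Rightarrow> 'n::finite dcube \<Rightarrow> 'a \<Rightarrow> real"
    and p :: real
  assumes "prob_space M"
    and "\<And>k Q. Q \<in> cubes_in k \<Longrightarrow> U k Q \<in> borel_measurable M"
    and "\<And>k Q. Q \<in> cubes_in k \<Longrightarrow> distr M lborel (U k Q) = uniform_measure lborel {0..1}"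
    and "prob_space.indep_vars M (\<lambda>_. borel) (\<lambda>(k, Q). U k Q) (SIGMA k:UNIV. cubes_in k)"
    and "0 < p" and "p \<le> 1"
  shows "(p \<ge> (1/2) ^ CARD('n) \<longrightarrow> (AE \<omega> in M. \<not> bounded (PiP U p \<omega>)))
       \<and> (p < (1/2) ^ CARD('n) \<longrightarrow> (AE \<omega> in M. bounded (PiP U p \<omega>)))"
proof -
  interpret P: perc M U p
    by (rule perc.intro[OF assms(1)], rule perc_axioms.intro) (use assms in auto)
  have h: "(1/2::real) ^ CARD('n) * 2 ^ CARD('n) = 1" by (simp flip: power_mult_distrib)
  have pos: "(0::real) < 2 ^ CARD('n)" by simp
  show ?thesis
  proof (intro conjI impI)
    assume "p \<ge> (1/2) ^ CARD('n)"
    then have "(1/2::real) ^ CARD('n) * 2 ^ CARD('n) \<le> p * 2 ^ CARD('n)" using pos by (intro mult_right_mono) auto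
    then show "AE \<omega> in M. \<not> bounded (PiP U p \<omega>)" using h by (intro P.unbounded_AE) simp
  next
    assume "p < (1/2) ^ CARD('n)"
    then have "p * 2 ^ CARD('n) < (1/2::real) ^ CARD('n) * 2 ^ CARD('n)" using pos by (intro mult_strict_right_mono) auto
    then show "AE \<omega> in M. bounded (PiP U p \<omega>)" using h by (intro P.bounded_AE) simp
  qed
qed

end
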